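(* Let $C$ be a finite order SISO deterministic program with uniformly distributed secret input. Let $S=\{N\in\mathbb{N}^+ : |\mathcal{O}_N|\ge 2\}$, and assume $S\neq\emptyset$. Then for every $\alpha\in(0,\infty]$, $$0<\inf_{N\in S}\frac{IL_\alpha(C,N)}{T_\alpha(\mathbf{p}_N)}\le\sup_{N\in S}\frac{IL_\alpha(C,N)}{T_\alpha(\mathbf{p}_N)}<\infty.$$
   Context: A SISO deterministic program $C$ is a family indexed by $N\in\mathbb{N}^+$: for each $N$, a random variable $A$ uniformly distributed on $\mathcal{A}_N=\{0,1,\dots,N-1\}$, and a surjective map $F_N$ from $\mathcal{A}_N$ onto a finite set $\mathcal{O}_N$. The output is $O=F_N(A)$, and $\mathbf{p}_N$ denotes its distribution vector, so $\mathbf{p}_N(o)=|F_N^{-1}(o)|/N$. $C$ is of finite order (an FOP) if $\sup_N\|\mathbf{p}_N\|_0<\infty$, where $\|\mathbf{p}\|_0$ is the number of nonzero entries of $\mathbf{p}$; equivalently, $\sup_N|\mathcal{O}_N|<\infty$. For a probability vector $\mathbf{p}=(p_1,\dots,p_n)$ and $\alpha\in(0,\infty]$, the Rényi entropy is $H_\alpha(\mathbf{p})=\frac{1}{1-\alpha}\log\sum_i p_i^\alpha$ for $\alpha\notin\{1,\infty\}$. The limiting cases are $H_1(\mathbf{p})=-\sum_i p_i\log p_i$ and $H_\infty(\mathbf{p})=-\log\max_i p_i$. The $\alpha$-information leakage is $IL_\alpha(C,N)=H_\alpha(\mathbf{p}_N)$. With $p_1=\|\mathbf{p}\|_\infty=\max_i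 p_i$, define $$T_\alpha(\mathbf{p})=\begin{cases}1-p_1 & \text{if } \alpha>1 \text{ (including } \alpha=\infty),\\ -(1-p_1)\log(1-p_1) & \text{if } \alpha=1,\\ (1-p_1)^\alpha & \text{if } 0<\alpha<1.\end{cases}$$ *)

theory Defs
  imports "HOL-Analysis.Analysis"
begin

text \<open>A SISO deterministic program is given by a family of maps F N from
  {0..<N} to an output type; the output set O_N is the image (so F N is
  surjective onto O_N by construction).\<close>

definition outputs :: "(nat \<Rightarrow> nat \<Rightarrow> 'o) \<Rightarrow> nat \<Rightarrow> 'o set" where
  "outputs F N = F N ` {..<N}"

definition finite_order :: "(nat \<Rightarrow> nat \<Rightarrow> 'o) \<Rightarrow> bool" where
  "finite_order F \<longleftrightarrow> (\<exists>B. \<forall>N>0. card (outputs F N) \<le> B)"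

definition pdist :: "(nat \<Rightarrow> nat \<Rightarrow> 'o) \<Rightarrow> nat \<Rightarrow> 'o \<Rightarrow> real" where
  "pdist F N y = real (card {a \<in> {..<N}. F N a = y}) / real N"

definition pmax :: "(nat \<Rightarrow> nat \<Rightarrow> 'o) \<Rightarrow> nat \<Rightarrow> real" where
  "pmax F N = Max (pdist F N ` outputs F N)"

text \<open>Renyi entropy (natural logarithm) of the output distribution, alpha in (0,\<infinity>].
  Sums range over the support O_N (all entries nonzero).\<close>
definition renyi :: "ereal \<Rightarrow> (nat \<Rightarrow> nat \<Rightarrow> 'o) \<Rightarrow> nat \<Rightarrow> real" where
  "renyi \<alpha> F N =
    (if \<alpha> = \<infinity> then - ln (pmax F N)
     else if \<alpha> = 1 then - (\<Sum>y\<in>outputs F N. pdist F N y * ln (pdist F N y))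
     else (1 / (1 - real_of_ereal \<alpha>)) *
          ln (\<Sum>y\<in>outputs F N. pdist F N y powr real_of_ereal \<alpha>))"

definition leakage :: "ereal \<Rightarrow> (nat \<Rightarrow> nat \<Rightarrow> 'o) \<Rightarrow> nat \<Rightarrow> real" where
  "leakage \<alpha> F N = renyi \<alpha> F N"

definition Tfun :: "ereal \<Rightarrow> (nat \<Rightarrow> nat \<Rightarrow> 'o) \<Rightarrow> nat \<Rightarrow> real" where
  "Tfun \<alpha> F N =
    (let p1 = pmax F N in
     if \<alpha> > 1 then 1 - p1
     else if \<alpha> = 1 then - (1 - p1) * ln (1 - p1)
     else (1 - p1) powr real_of_ereal \<alpha>)"

end

theory Submission
  imports Defs
begin

context
  fixes Os :: "'o set" and p :: "'o \<Rightarrow> real" and B :: nat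
  assumes fin: "finite Os" and pos: "\<forall>y\<in>Os. 0 < p y" and s1: "sum p Os = 1"
    and c2: "2 \<le> card Os" and cB: "card Os \<le> B"
begin

lemma core:
  obtains y1 where "y1 \<in> Os" "p y1 = Max (p`Os)" "\<forall>y\<in>Os. p y \<le> Max (p`Os)"
    "sum p (Os - {y1}) = 1 - Max (p`Os)" "Os - {y1} \<noteq> {}"
    "\<forall>y\<in>Os-{y1}. p y \<le> 1 - Max (p`Os)" "1 / real B \<le> Max (p`Os)"
    "0 < 1 - Max (p`Os)" "0 < Max (p`Os)" "real B \<ge> 2" "card (Os - {y1}) \<le> B"
proof -
  define M where "M = Max (p`Os)"
  have ne: "Os \<noteq> {}" using c2 by auto
  have "M \<in> p ` Os" unfolding M_def using fin ne by (intro Max_in) auto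
  then obtain y1 where y1: "y1 \<in> Os" "p y1 = M" by auto
  have le: "\<forall>y\<in>Os. p y \<le> M" unfolding M_def using fin by auto
  have sr: "sum p Os = p y1 + sum p (Os - {y1})" using fin y1 by (simp add: sum.remove)
  hence sq: "sum p (Os - {y1}) = 1 - M" using s1 y1 by simp
  have cc: "card (Os - {y1}) = card Os - 1" using y1 fin by simp
  hence "card (Os - {y1}) \<ge> 1" using c2 by simp
  hence ne2: "Os - {y1} \<noteq> {}" by (metis card.empty not_one_le_zero)
  have lq: "\<forall>y\<in>Os-{y1}. p y \<le> 1 - M"
  proof
    fix y assume "y \<in> Os - {y1}"
    hence "p y \<le> sum p (Os - {y1})" using fin pos by (intro member_le_sum) auto
    thus "p y \<le> 1 - M" using sq by simp
  qed
  have "sum p Os \<le> of_nat (card Os) * M" using le sum_bounded_above[of Os p M] by auto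
  hence "1 \<le> real (card Os) * M" using s1 by simp
  moreover have "real (card Os) \<le> real B" using cB by simp
  moreover have "0 < M" using pos y1 by auto
  ultimately have "1 \<le> real B * M"
    by (smt (verit, best) mult_right_mono)
  moreover have B2: "real B \<ge> 2" using c2 cB by simp
  ultimately have b: "1 / real B \<le> M" by (simp add: divide_le_eq mult.commute)
  have qp: "0 < 1 - M" using sq[symmetric] ne2 fin pos by (metis Diff_iff finite_Diff sum_pos)
  show ?thesis using that[of y1] y1 le sq ne2 lq b qp \<open>0 < M\<close> B2 cc cB unfolding M_def by auto
qed

lemma case_inf:
  defines "M \<equiv> Max (p`Os)"
  shows "1 - M \<le> - ln M \<and> - ln M \<le> real B * (1 - M)"
proof -
  obtain y1 where b: "1 / real B \<le> M" "0 < 1 - M" "0 < M" "real B \<ge> 2"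
    using core unfolding M_def by metis
  have "ln M \<le> M - 1" using b ln_le_minus_one by simp
  moreover have "ln (1/M) \<le> 1/M - 1" using b ln_le_minus_one by simp
  hence "- ln M \<le> (1 - M) / M" using b by (simp add: ln_div diff_divide_distrib)
  moreover have "(1 - M) / M \<le> real B * (1 - M)"
  proof -
    have "1 / M \<le> real B" using b by (simp add: divide_le_eq mult.commute)
    hence "(1/M) * (1 - M) \<le> real B * (1 - M)" using b by (intro mult_right_mono) auto
    thus ?thesis by simp
  qed
  ultimately show ?thesis by linarith
qed

lemma case_gt1:
  fixes a :: real
  assumes a: "1 < a"
  defines "M \<equiv> Max (p`Os)" and "S \<equiv> (\<Sum>y\<in>Os. p y powr a)"
  shows "1 - M \<le> (1 / (1 - a)) * ln S \<and> (1 / (1 - a)) * ln S \<le> a / (a - 1) * (real B * (1 - M))"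
proof -
  obtain y1 where b: "y1 \<in> Os" "p y1 = M" "\<forall>y\<in>Os. p y \<le> M" "0 < M"
    using core unfolding M_def by metis
  have ci: "1 - M \<le> - ln M \<and> - ln M \<le> real B * (1 - M)" using case_inf unfolding M_def by simp
  have S1: "M powr a \<le> S" unfolding S_def using b fin pos
    by (metis (no_types, lifting) member_le_sum powr_ge_zero)
  have Mp: "0 < M powr a" using b by simp
  have "S \<le> (\<Sum>y\<in>Os. p y * M powr (a - 1))" unfolding S_def
  proof (rule sum_mono)
    fix y assume y: "y \<in> Os"
    have "p y powr a = p y powr 1 * p y powr (a - 1)" by (metis powr_add add.commute diff_add_cancel)
    also have "\<dots> = p y * p y powr (a - 1)" using pos y by (simp add: abs_of_pos)
    also have "\<dots> \<le> p y * M powr (a - 1)" using pos y b a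
      by (intro mult_left_mono powr_mono2) auto
    finally show "p y powr a \<le> p y * M powr (a - 1)" .
  qed
  also have "\<dots> = M powr (a - 1)" using s1 by (simp add: sum_distrib_right[symmetric])
  finally have S2: "S \<le> M powr (a - 1)" .
  have Sp: "0 < S" using S1 Mp by linarith
  have e1: "ln (M powr a) = a * ln M" "ln (M powr (a - 1)) = (a - 1) * ln M" using b by (simp_all add: ln_powr)
  have "ln (M powr a) \<le> ln S" using S1 Mp Sp by (subst ln_le_cancel_iff) auto
  hence l1: "a * ln M \<le> ln S" using e1 by simp
  have "ln S \<le> ln (M powr (a - 1))" using S2 Sp b by (subst ln_le_cancel_iff) auto
  hence l2: "ln S \<le> (a - 1) * ln M" using e1 by simp
  have eq: "(1 / (1 - a)) * ln S = (- ln S) / (a - 1)" using a by (simp add: field_simps)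
  have lo: "- ln M \<le> (- ln S) / (a - 1)" using l2 a by (simp add: divide_le_eq mult.commute)
  have hi: "(- ln S) / (a - 1) \<le> a / (a - 1) * (- ln M)" 
  proof -
    have "(- ln S) / (a - 1) \<le> (a * (- ln M)) / (a - 1)" using l1 a by (intro divide_right_mono) auto
    thus ?thesis by simp
  qed
  have "a / (a - 1) * (- ln M) \<le> a / (a - 1) * (real B * (1 - M))"
    using ci a by (intro mult_left_mono) auto
  thus ?thesis using lo hi eq ci by linarith
qed

lemma case_one:
  defines "M \<equiv> Max (p`Os)" and "H \<equiv> - (\<Sum>y\<in>Os. p y * ln (p y))"
  shows "0 < - (1 - M) * ln (1 - M) \<and> - (1 - M) * ln (1 - M) \<le> H
    \<and> H \<le> ((real B + 1) * real B + 1) * (- (1 - M) * ln (1 - M))"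
proof -
  obtain y1 where b: "y1 \<in> Os" "p y1 = M" "\<forall>y\<in>Os. p y \<le> M"
    "sum p (Os - {y1}) = 1 - M" "\<forall>y\<in>Os-{y1}. p y \<le> 1 - M" "1 / real B \<le> M"
    "0 < 1 - M" "0 < M" "real B \<ge> 2" "card (Os - {y1}) \<le> B"
    using core unfolding M_def by metis
  define q where "q = 1 - M"
  define T where "T = - q * ln q"
  have q: "0 < q" "q < 1" using b q_def by auto
  have M1: "M \<le> 1" using q q_def by simp
  have lnq: "ln q < 0" using q by simp
  have Tp: "0 < T" unfolding T_def using q lnq by (simp add: mult_pos_neg)
  have Hs: "H = - M * ln M + (\<Sum>y\<in>Os-{y1}. - p y * ln (p y))"
    unfolding H_def using fin b by (simp add: sum.remove sum_negf)
  have rest_lo: "(\<Sum>y\<in>Os-{y1}. - p y * ln q) \<le> (\<Sum>y\<in>Os-{y1}. - p y * ln (p y))"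
  proof (rule sum_mono)
    fix y assume y: "y \<in> Os - {y1}"
    have "ln (p y) \<le> ln q" using pos y b q_def by simp
    thus "- p y * ln q \<le> - p y * ln (p y)" using pos y by (simp add: mult_left_mono)
  qed
  have rsum: "(\<Sum>y\<in>Os-{y1}. - p y * ln q) = T"
  proof -
    have "(\<Sum>y\<in>Os-{y1}. - p y * ln q) = - (sum p (Os-{y1})) * ln q"
      by (simp add: sum_distrib_right sum_negf)
    thus ?thesis unfolding T_def using b q_def by simp
  qed
  have Mln: "0 \<le> - M * ln M" using b M1 by (simp add: mult_nonneg_nonpos)
  have lo: "T \<le> H" using Hs rest_lo rsum Mln by linarith
  have Mhi: "- M * ln M \<le> q"
  proof -
    have "ln (1/M) \<le> 1/M - 1" using b ln_le_minus_one by simp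
    hence "- ln M \<le> 1/M - 1" using b by (simp add: ln_div)
    hence "M * (- ln M) \<le> M * (1/M - 1)" using b by (intro mult_left_mono) auto
    thus ?thesis using b q_def by (simp add: algebra_simps)
  qed
  have rest_hi: "(\<Sum>y\<in>Os-{y1}. - p y * ln (p y)) \<le> (\<Sum>y\<in>Os-{y1}. q - p y * ln q)"
  proof (rule sum_mono)
    fix y assume y: "y \<in> Os - {y1}"
    have py: "0 < p y" using pos y by auto
    have "ln (q / p y) \<le> q / p y - 1" using py q ln_le_minus_one by simp
    hence "ln q - ln (p y) \<le> q / p y - 1" using py q by (simp add: ln_div)
    hence "p y * (ln q - ln (p y)) \<le> p y * (q / p y - 1)" using py by (intro mult_left_mono) auto
    hence "p y * ln q - p y * ln (p y) \<le> q - p y" using py by (simp add: algebra_simps)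
    thus "- p y * ln (p y) \<le> q - p y * ln q" using py by linarith
  qed
  have "(\<Sum>y\<in>Os-{y1}. q - p y * ln q) = real (card (Os - {y1})) * q - sum p (Os-{y1}) * ln q"
    by (simp add: sum_subtractf sum_distrib_right)
  also have "\<dots> = real (card (Os - {y1})) * q + T"
    unfolding T_def using b q_def by (simp add: algebra_simps)
  also have "\<dots> \<le> real B * q + T" using b q by (intro add_right_mono mult_right_mono) auto
  finally have rh: "(\<Sum>y\<in>Os-{y1}. - p y * ln (p y)) \<le> real B * q + T" using rest_hi by linarith
  have H1: "H \<le> (real B + 1) * q + T" using Hs Mhi rh by (simp add: algebra_simps)
  have qT: "q \<le> real B * T"
  proof -
    have "ln q \<le> q - 1" using q ln_le_minus_one by simp
    hence "1 / real B \<le> - ln q" using b q_def by simp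
    hence "q * (1 / real B) \<le> q * (- ln q)" using q by (intro mult_left_mono) auto
    hence "q / real B \<le> T" unfolding T_def by simp
    thus ?thesis using b by (simp add: divide_le_eq mult.commute)
  qed
  have "(real B + 1) * q \<le> (real B + 1) * (real B * T)" using qT by (intro mult_left_mono) auto
  hence hi: "H \<le> ((real B + 1) * real B + 1) * T" using H1 by (simp add: algebra_simps)
  show ?thesis using Tp lo hi unfolding T_def q_def by simp
qed

lemma case_lt1:
  fixes a :: real
  assumes a: "0 < a" "a < 1"
  defines "M \<equiv> Max (p`Os)" and "S \<equiv> (\<Sum>y\<in>Os. p y powr a)"
  shows "0 < (1 - M) powr a \<and>
    (1 - (1 - 1 / real B) powr (1 - a)) / (2 * (1 - a)) * (1 - M) powr a \<le> (1 / (1 - a)) * ln S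
    \<and> (1 / (1 - a)) * ln S \<le> real B / (1 - a) * (1 - M) powr a"
proof -
  obtain y1 where b: "y1 \<in> Os" "p y1 = M" "\<forall>y\<in>Os. p y \<le> M"
    "sum p (Os - {y1}) = 1 - M" "\<forall>y\<in>Os-{y1}. p y \<le> 1 - M" "1 / real B \<le> M"
    "0 < 1 - M" "0 < M" "real B \<ge> 2" "card (Os - {y1}) \<le> B"
    using core unfolding M_def by metis
  define q where "q = 1 - M"
  define r where "r = (1 - 1 / real B) powr (1 - a)"
  have q: "0 < q" "q < 1" "q \<le> 1 - 1 / real B" using b q_def by auto
  have M1: "M \<le> 1" using q q_def by simp
  have Ss: "S = M powr a + (\<Sum>y\<in>Os-{y1}. p y powr a)"
    unfolding S_def using fin b by (simp add: sum.remove)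
  have Tp: "0 < q powr a" using q by simp
  have Mlo: "M \<le> M powr a"
    using powr_mono'[of a 1 M] a b M1 by simp
  have rlo: "q * q powr (a - 1) \<le> (\<Sum>y\<in>Os-{y1}. p y powr a)"
  proof -
    have "(\<Sum>y\<in>Os-{y1}. p y * q powr (a - 1)) \<le> (\<Sum>y\<in>Os-{y1}. p y powr a)"
    proof (rule sum_mono)
      fix y assume y: "y \<in> Os - {y1}"
      have py: "0 < p y" "p y \<le> q" using pos y b q_def by auto
      have "p y powr a = p y powr 1 * p y powr (a - 1)" by (metis powr_add add.commute diff_add_cancel)
      also have "\<dots> = p y * p y powr (a - 1)" using py by (simp add: abs_of_pos)
      finally have e: "p y powr a = p y * p y powr (a - 1)" .
      have "q powr (a - 1) \<le> p y powr (a - 1)" using py a by (intro powr_mono2') auto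
      thus "p y * q powr (a - 1) \<le> p y powr a" unfolding e using py by (intro mult_left_mono) auto
    qed
    moreover have "(\<Sum>y\<in>Os-{y1}. p y * q powr (a - 1)) = q * q powr (a - 1)"
      using b q_def by (simp add: sum_distrib_right[symmetric])
    ultimately show ?thesis by simp
  qed
  have qq: "q * q powr (a - 1) = q powr a"
  proof -
    have "q powr a = q powr 1 * q powr (a - 1)" by (metis powr_add add.commute diff_add_cancel)
    thus ?thesis using q by simp
  qed
  define x where "x = q powr a - q"
  have S1: "1 + x \<le> S" using Ss Mlo rlo qq unfolding x_def q_def by simp
  have qs: "q = q powr a * q powr (1 - a)"
  proof -
    have "q powr a * q powr (1 - a) = q powr (a + (1 - a))" by (rule powr_add[symmetric])
    thus ?thesis using q by simp
  qed
  have qr: "q powr (1 - a) \<le> r" unfolding r_def using q a by (intro powr_mono2) auto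
  have r1: "r < 1"
  proof -
    have "1 - 1 / real B < 1" using b by simp
    moreover have "0 \<le> 1 - 1 / real B" using b by simp
    ultimately have "(1 - 1 / real B) powr (1 - a) < 1 powr (1 - a)" using a
      by (intro powr_less_mono2) auto
    thus ?thesis unfolding r_def by simp
  qed
  have xlo: "q powr a * (1 - r) \<le> x"
  proof -
    have "q powr a * q powr (1 - a) \<le> q powr a * r" using qr Tp by (intro mult_left_mono) auto
    thus ?thesis unfolding x_def using qs by (simp add: algebra_simps)
  qed
  have "0 \<le> q powr a * (1 - r)" using r1 Tp by simp
  hence x0: "0 \<le> x" using xlo by linarith
  have qa1: "q powr a \<le> 1" using q a by (intro powr_le1) auto
  have x1: "x \<le> 1" unfolding x_def using qa1 q by simp
  have lnx: "x / 2 \<le> ln (1 + x)"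
  proof -
    have "ln (1 / (1 + x)) \<le> 1 / (1 + x) - 1" using x0 by (intro ln_le_minus_one) auto
    hence "x / (1 + x) \<le> ln (1 + x)" using x0 by (simp add: ln_div field_simps)
    moreover have "x / 2 \<le> x / (1 + x)" using x0 x1 by (intro divide_left_mono) auto
    ultimately show ?thesis by linarith
  qed
  have "ln (1 + x) \<le> ln S" using S1 x0 by (subst ln_le_cancel_iff) auto
  hence lS: "q powr a * (1 - r) / 2 \<le> ln S" using lnx xlo by linarith
  have lo: "(1 - r) / (2 * (1 - a)) * q powr a \<le> (1 / (1 - a)) * ln S"
  proof -
    have "(q powr a * (1 - r) / 2) / (1 - a) \<le> ln S / (1 - a)" using lS a by (intro divide_right_mono) auto
    thus ?thesis by (simp add: field_simps)
  qed
  have "S \<le> 1 + real B * q powr a"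
  proof -
    have "M powr a \<le> 1" using M1 b a by (intro powr_le1) auto
    moreover have "(\<Sum>y\<in>Os-{y1}. p y powr a) \<le> (\<Sum>y\<in>Os-{y1}. q powr a)"
      using pos b q_def a by (intro sum_mono powr_mono2) auto
    moreover have "(\<Sum>y\<in>Os-{y1}. q powr a) \<le> real B * q powr a"
      using b Tp by (simp add: mult_right_mono)
    ultimately show ?thesis using Ss by linarith
  qed
  moreover have "ln S \<le> S - 1" using S1 x0 by (intro ln_le_minus_one) auto
  ultimately have "ln S \<le> real B * q powr a" by linarith
  hence hi: "(1 / (1 - a)) * ln S \<le> real B / (1 - a) * q powr a"
    using a by (simp add: divide_right_mono)
  show ?thesis using Tp lo hi unfolding q_def r_def by simp
qed

end


lemma pdist_facts:
  assumes N: "0 < N"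
  shows "finite (outputs F N)" "\<forall>y\<in>outputs F N. 0 < pdist F N y" "sum (pdist F N) (outputs F N) = 1"
proof -
  show "finite (outputs F N)" unfolding outputs_def by simp
  show "\<forall>y\<in>outputs F N. 0 < pdist F N y"
  proof
    fix y assume "y \<in> outputs F N"
    then obtain a where a: "a < N" "F N a = y" unfolding outputs_def by auto
    have "a \<in> {a \<in> {..<N}. F N a = y}" using a by simp
    moreover have "finite {a \<in> {..<N}. F N a = y}" by simp
    ultimately have "card {a \<in> {..<N}. F N a = y} \<noteq> 0" using card_0_eq by blast
    hence cp: "0 < real (card {a \<in> {..<N}. F N a = y})" by linarith
    show "0 < pdist F N y" unfolding pdist_def using N cp by (intro divide_pos_pos) simp_all
  qed
  have "card {..<N} = (\<Sum>y\<in>F N ` {..<N}. card {a \<in> {..<N}. F N a = y})"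
    using sum.image_gen[of "{..<N}" "\<lambda>_. (1::nat)" "F N"] by simp
  hence "real (card {..<N}) = real (\<Sum>y\<in>F N ` {..<N}. card {a \<in> {..<N}. F N a = y})" by simp
  hence "real N = (\<Sum>y\<in>outputs F N. real (card {a \<in> {..<N}. F N a = y}))"
    unfolding outputs_def by simp
  thus "sum (pdist F N) (outputs F N) = 1" unfolding pdist_def using N
    by (simp add: sum_divide_distrib[symmetric])
qed

lemma ratio_bound:
  fixes H T c C :: real
  assumes "0 < T" "c * T \<le> H" "H \<le> C * T"
  shows "c \<le> H / T \<and> H / T \<le> C"
  using assms by (simp add: le_divide_eq divide_le_eq)

lemma bounds:
  fixes F :: "nat \<Rightarrow> nat \<Rightarrow> 'o" and \<alpha> :: ereal
  assumes fo: "finite_order F" and al: "0 < \<alpha>"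
  shows "\<exists>c C. 0 < c \<and> (\<forall>N. 0 < N \<and> 2 \<le> card (outputs F N) \<longrightarrow>
     c \<le> leakage \<alpha> F N / Tfun \<alpha> F N \<and> leakage \<alpha> F N / Tfun \<alpha> F N \<le> C)"
proof -
  obtain B0 where B0: "\<forall>N>0. card (outputs F N) \<le> B0" using fo unfolding finite_order_def by auto
  define B where "B = max B0 2"
  have B: "\<forall>N>0. card (outputs F N) \<le> B" "2 \<le> B" using B0 unfolding B_def by (auto simp: le_max_iff_disj)
  have hyp: "finite (outputs F N)" "\<forall>y\<in>outputs F N. 0 < pdist F N y" "sum (pdist F N) (outputs F N) = 1"
     "2 \<le> card (outputs F N)" "card (outputs F N) \<le> B" if N: "0 < N \<and> 2 \<le> card (outputs F N)" for N
    using pdist_facts[of N F] N B by auto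
  have qpos: "0 < 1 - pmax F N" if N: "0 < N \<and> 2 \<le> card (outputs F N)" for N
  proof -
    obtain y1 where "0 < 1 - Max (pdist F N ` outputs F N)"
      by (rule core[OF hyp[OF N]])
    thus ?thesis unfolding pmax_def .
  qed
  consider "\<alpha> = \<infinity>" | a where "\<alpha> = ereal a" "0 < a"
    using al by (cases \<alpha>) auto
  thus ?thesis
  proof cases
    case 1
    have "\<forall>N. 0 < N \<and> 2 \<le> card (outputs F N) \<longrightarrow> 1 \<le> leakage \<alpha> F N / Tfun \<alpha> F N \<and> leakage \<alpha> F N / Tfun \<alpha> F N \<le> real B"
    proof (intro allI impI)
      fix N assume N: "0 < N \<and> 2 \<le> card (outputs F N)"
      have h: "1 - pmax F N \<le> - ln (pmax F N) \<and> - ln (pmax F N) \<le> real B * (1 - pmax F N)"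
        using case_inf[OF hyp[OF N]] unfolding pmax_def .
      have "1 \<le> (- ln (pmax F N)) / (1 - pmax F N) \<and> (- ln (pmax F N)) / (1 - pmax F N) \<le> real B"
        using h qpos[OF N] by (intro ratio_bound) auto
      thus "1 \<le> leakage \<alpha> F N / Tfun \<alpha> F N \<and> leakage \<alpha> F N / Tfun \<alpha> F N \<le> real B"
        unfolding leakage_def renyi_def Tfun_def using 1 by simp
    qed
    thus ?thesis using zero_less_one by blast
  next
    case 2
    note a = 2
    consider "1 < a" | "a = 1" | "a < 1" by linarith
    thus ?thesis
    proof cases
      case 1
      have "\<forall>N. 0 < N \<and> 2 \<le> card (outputs F N) \<longrightarrow> 1 \<le> leakage \<alpha> F N / Tfun \<alpha> F N \<and> leakage \<alpha> F N / Tfun \<alpha> F N \<le> a / (a - 1) * real B"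
      proof (intro allI impI)
        fix N assume N: "0 < N \<and> 2 \<le> card (outputs F N)"
        have h: "1 - pmax F N \<le> (1 / (1 - a)) * ln (\<Sum>y\<in>outputs F N. pdist F N y powr a) \<and>
            (1 / (1 - a)) * ln (\<Sum>y\<in>outputs F N. pdist F N y powr a) \<le> a / (a - 1) * (real B * (1 - pmax F N))"
          using case_gt1[OF hyp[OF N] 1] unfolding pmax_def .
        have "1 \<le> ((1 / (1 - a)) * ln (\<Sum>y\<in>outputs F N. pdist F N y powr a)) / (1 - pmax F N) \<and>
            ((1 / (1 - a)) * ln (\<Sum>y\<in>outputs F N. pdist F N y powr a)) / (1 - pmax F N) \<le> a / (a - 1) * real B"
          using h qpos[OF N] by (intro ratio_bound) (auto simp: mult.assoc)
        thus "1 \<le> leakage \<alpha> F N / Tfun \<alpha> F N \<and> leakage \<alpha> F N / Tfun \<alpha> F N \<le> a / (a - 1) * real B"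
          unfolding leakage_def renyi_def Tfun_def using a 1 by simp
      qed
      thus ?thesis using zero_less_one by blast
    next
      case 2
      have "\<forall>N. 0 < N \<and> 2 \<le> card (outputs F N) \<longrightarrow> 1 \<le> leakage \<alpha> F N / Tfun \<alpha> F N \<and> leakage \<alpha> F N / Tfun \<alpha> F N \<le> (real B + 1) * real B + 1"
      proof (intro allI impI)
        fix N assume N: "0 < N \<and> 2 \<le> card (outputs F N)"
        have h: "0 < - (1 - pmax F N) * ln (1 - pmax F N) \<and> - (1 - pmax F N) * ln (1 - pmax F N) \<le> - (\<Sum>y\<in>outputs F N. pdist F N y * ln (pdist F N y))
          \<and> - (\<Sum>y\<in>outputs F N. pdist F N y * ln (pdist F N y)) \<le> ((real B + 1) * real B + 1) * (- (1 - pmax F N) * ln (1 - pmax F N))"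
          using case_one[OF hyp[OF N]] unfolding pmax_def .
        hence "1 \<le> (- (\<Sum>y\<in>outputs F N. pdist F N y * ln (pdist F N y))) / (- (1 - pmax F N) * ln (1 - pmax F N)) \<and>
          (- (\<Sum>y\<in>outputs F N. pdist F N y * ln (pdist F N y))) / (- (1 - pmax F N) * ln (1 - pmax F N)) \<le> (real B + 1) * real B + 1"
          by (intro ratio_bound) auto
        thus "1 \<le> leakage \<alpha> F N / Tfun \<alpha> F N \<and> leakage \<alpha> F N / Tfun \<alpha> F N \<le> (real B + 1) * real B + 1"
          unfolding leakage_def renyi_def Tfun_def using a 2 by (simp add: one_ereal_def Let_def)
      qed
      thus ?thesis using zero_less_one by blast
    next
      case 3
      define c where "c = (1 - (1 - 1 / real B) powr (1 - a)) / (2 * (1 - a))"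
      have cpos: "0 < c"
      proof -
        have "(1 - 1 / real B) powr (1 - a) < 1 powr (1 - a)" using 3 B
          by (intro powr_less_mono2) auto
        thus ?thesis unfolding c_def using 3 by simp
      qed
      have "\<forall>N. 0 < N \<and> 2 \<le> card (outputs F N) \<longrightarrow> c \<le> leakage \<alpha> F N / Tfun \<alpha> F N \<and> leakage \<alpha> F N / Tfun \<alpha> F N \<le> real B / (1 - a)"
      proof (intro allI impI)
        fix N assume N: "0 < N \<and> 2 \<le> card (outputs F N)"
        have h: "0 < (1 - pmax F N) powr a \<and> c * (1 - pmax F N) powr a \<le> (1 / (1 - a)) * ln (\<Sum>y\<in>outputs F N. pdist F N y powr a) \<and>
            (1 / (1 - a)) * ln (\<Sum>y\<in>outputs F N. pdist F N y powr a) \<le> real B / (1 - a) * (1 - pmax F N) powr a"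
          using case_lt1[OF hyp[OF N] a(2) 3] unfolding pmax_def c_def .
        hence "c \<le> ((1 / (1 - a)) * ln (\<Sum>y\<in>outputs F N. pdist F N y powr a)) / (1 - pmax F N) powr a \<and>
            ((1 / (1 - a)) * ln (\<Sum>y\<in>outputs F N. pdist F N y powr a)) / (1 - pmax F N) powr a \<le> real B / (1 - a)"
          by (intro ratio_bound) auto
        thus "c \<le> leakage \<alpha> F N / Tfun \<alpha> F N \<and> leakage \<alpha> F N / Tfun \<alpha> F N \<le> real B / (1 - a)"
          unfolding leakage_def renyi_def Tfun_def using a 3 by (simp add: one_ereal_def Let_def)
      qed
      thus ?thesis using cpos by blast
    qed
  qed
qed

theorem proposition1:
  fixes F :: "nat \<Rightarrow> nat \<Rightarrow> 'o" and \<alpha> :: ereal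
  assumes "finite_order F"
    and "S = {N. N > 0 \<and> card (outputs F N) \<ge> 2}"
    and "S \<noteq> {}"
    and "0 < \<alpha>"
  shows "0 < (INF N\<in>S. ereal (leakage \<alpha> F N / Tfun \<alpha> F N))
    \<and> (INF N\<in>S. ereal (leakage \<alpha> F N / Tfun \<alpha> F N))
        \<le> (SUP N\<in>S. ereal (leakage \<alpha> F N / Tfun \<alpha> F N))
    \<and> (SUP N\<in>S. ereal (leakage \<alpha> F N / Tfun \<alpha> F N)) < \<infinity>"
proof -
  obtain c C where c: "0 < c" and cb: "\<forall>N. 0 < N \<and> 2 \<le> card (outputs F N) \<longrightarrow>
     c \<le> leakage \<alpha> F N / Tfun \<alpha> F N \<and> leakage \<alpha> F N / Tfun \<alpha> F N \<le> C"
    using bounds[OF assms(1) assms(4)] by blast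
  have "ereal c \<le> (INF N\<in>S. ereal (leakage \<alpha> F N / Tfun \<alpha> F N))"
    using cb assms(2) by (intro INF_greatest) auto
  hence 1: "0 < (INF N\<in>S. ereal (leakage \<alpha> F N / Tfun \<alpha> F N))" using c
    by (meson ereal_less(2) less_le_trans)
  have "(SUP N\<in>S. ereal (leakage \<alpha> F N / Tfun \<alpha> F N)) \<le> ereal C"
    using cb assms(2) by (intro SUP_least) auto
  moreover have "ereal C < \<infinity>" by simp
  ultimately have 3: "(SUP N\<in>S. ereal (leakage \<alpha> F N / Tfun \<alpha> F N)) < \<infinity>"
    by (rule le_less_trans)
  have 2: "(INF N\<in>S. ereal (leakage \<alpha> F N / Tfun \<alpha> F N)) \<le> (SUP N\<in>S. ereal (leakage \<alpha> F N / Tfun \<alpha> F N))"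
    using assms(3) by (rule INF_le_SUP)
  show ?thesis using 1 2 3 by blast
qed

end
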